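(* For every fixed integer $K\ge 1$, \[ \sum_{k=0}^{m-2}\zeta(m-k,\{1\}_k)=\sum_{j=1}^{K}\binom{2j}{j}\frac{1}{j^{m}}+O\!\left((K+1)^{-m}\right)\qquad(m\to\infty), \] i.e. $\sum_{k=0}^{m-2}\zeta(m-k,\{1\}_k)\approx 2+\frac{6}{2^m}+\frac{20}{3^m}+\frac{70}{4^m}+\cdots$. In particular, the average of the $m-1$ numbers $\zeta(m),\zeta(m-1,1),\dots,\zeta(2,\{1\}_{m-2})$ is asymptotic to $2/m$ as $m\to\infty$.
   Context: For positive integers $s_1\ge 2, s_2,\dots,s_l$, the multiple zeta value is $\zeta(s_1,\dots,s_l):=\sum_{n_1>n_2>\cdots>n_l>0} n_1^{-s_1}\cdots n_l^{-s_l}$. The notation $\{1\}_k$ denotes the string $1,1,\dots,1$ ($k$ times); for $k=0$ it is empty. *)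

theory Defs
  imports Complex_Main "HOL-Library.Landau_Symbols"
begin

text \<open>Truncated multiple zeta sum:
  mzv_trunc [s1,...,sl] N = sum over N >= n1 > n2 > ... > nl > 0 of n1^(-s1) ... nl^(-sl).\<close>
fun mzv_trunc :: "nat list \<Rightarrow> nat \<Rightarrow> real" where
  "mzv_trunc [] N = 1"
| "mzv_trunc (s # ss) N = (\<Sum>n = 1..N. (1 / real n ^ s) * mzv_trunc ss (n - 1))"

fun mzv :: "nat list \<Rightarrow> real" where
  "mzv [] = 1"
| "mzv (s # ss) = (\<Sum>n. (1 / real (Suc n) ^ s) * mzv_trunc ss n)"

end

theory Submission
  imports Defs "HOL-Library.Extended_Nonnegative_Real" "HOL-Analysis.Summation_Tests" "HOL-Real_Asymp.Real_Asymp"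
begin

definition E :: "nat \<Rightarrow> nat \<Rightarrow> real" where "E k N = mzv_trunc (replicate k 1) N"

lemma E_0[simp]: "E 0 N = 1" by (simp add: E_def)
lemma E_Suc: "E (Suc k) N = (\<Sum>n=1..N. E k (n-1) / real n)"
  by (simp add: E_def)

lemma E_nonneg: "E k N \<ge> 0"
  by (induction k arbitrary: N) (auto simp: E_Suc intro!: sum_nonneg divide_nonneg_nonneg)

lemma E_Suc_Suc: "E (Suc k) (Suc N) = E (Suc k) N + E k N / real (Suc N)"
  by (simp add: E_Suc)

lemma E_k_0: "E (Suc k) 0 = 0" by (simp add: E_Suc)

lemma E_zero: "N < k \<Longrightarrow> E k N = 0"
proof (induction N arbitrary: k)
  case 0 then show ?case by (cases k) (auto simp: E_k_0)
next
  case (Suc N)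
  then obtain k' where k: "k = Suc k'" by (cases k) auto
  with Suc show ?case by (simp add: E_Suc_Suc)
qed

lemma aux_lin: "a = P + c * P \<Longrightarrow> b = (1 + c) * P \<Longrightarrow> a = (b::real)"
  by (simp add: distrib_right)

lemma E_gen: "N \<le> h \<Longrightarrow> (\<Sum>k\<le>h. x^k * E k N) = (\<Prod>j=1..N. 1 + x / real j)"
proof (induction N arbitrary: h)
  case 0
  have "(\<Sum>k\<le>h. x^k * E k 0) = (\<Sum>k\<le>h. if k = 0 then 1 else 0)"
    by (intro sum.cong) (auto simp: E_zero)
  then show ?case by simp
next
  case (Suc N)
  then obtain h' where h: "h = Suc h'" and hN: "N \<le> h'" by (cases h) auto
  have "(\<Sum>k\<le>h. x^k * E k (Suc N)) = x^0 * E 0 (Suc N) + (\<Sum>k\<le>h'. x^(Suc k) * E (Suc k) (Suc N))"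
    unfolding h sum.atMost_Suc_shift by simp
  also have "\<dots> = 1 + (\<Sum>k\<le>h'. x^(Suc k) * E (Suc k) N) + x / real (Suc N) * (\<Sum>k\<le>h'. x^k * E k N)"
    by (simp add: E_Suc_Suc algebra_simps sum.distrib sum_distrib_left)
  also have "1 + (\<Sum>k\<le>h'. x^(Suc k) * E (Suc k) N) = (\<Sum>k\<le>Suc h'. x^k * E k N)"
    unfolding sum.atMost_Suc_shift by simp
  finally have eq: "(\<Sum>k\<le>h. x^k * E k (Suc N)) = (\<Sum>k\<le>Suc h'. x^k * E k N) + x / real (Suc N) * (\<Sum>k\<le>h'. x^k * E k N)" .
  have i1: "(\<Sum>k\<le>Suc h'. x^k * E k N) = (\<Prod>j=1..N. 1 + x / real j)" by (rule Suc.IH) (use hN in simp)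
  have i2: "(\<Sum>k\<le>h'. x^k * E k N) = (\<Prod>j=1..N. 1 + x / real j)" by (rule Suc.IH) (use hN in simp)
  have ps: "(\<Prod>j=1..Suc N. 1 + x / real j) = (1 + x / real (Suc N)) * (\<Prod>j=1..N. 1 + x / real j)"
    by (rule prod.nat_ivl_Suc') simp
  show ?case by (rule aux_lin[OF eq[unfolded i1 i2] ps])
qed

lemma prod_shift_fact0: "fact c * (\<Prod>j=1..N. real (j + c)) = fact (N + c)"
proof (induction N)
  case (Suc N)
  have "(\<Prod>j=1..Suc N. real (j + c)) = real (Suc N + c) * (\<Prod>j=1..N. real (j + c))"
    by (rule prod.nat_ivl_Suc') simp
  then have "fact c * (\<Prod>j=1..Suc N. real (j + c)) = real (Suc N + c) * (fact c * (\<Prod>j=1..N. real (j + c)))"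
    by (simp only: mult.left_commute)
  also have "\<dots> = fact (Suc N + c)" unfolding Suc.IH by simp
  finally show ?case .
qed simp

lemma prod_shift_fact: "(\<Prod>j=1..N. real (j + c)) = fact (N + c) / fact c"
  using prod_shift_fact0[of c N] by (simp add: field_simps)

lemma prod_binom: "(\<Prod>j=1..N. 1 + real (N+1) / real j) = real ((2*(N+1)) choose (N+1)) / 2"
proof -
  define M where "M = N + 1"
  have "(\<Prod>j=1..N. 1 + real M / real j) = (\<Prod>j=1..N. real (j+M) / real (j + 0))"
    by (intro prod.cong) (auto simp: field_simps)
  also have "\<dots> = (\<Prod>j=1..N. real (j+M)) / (\<Prod>j=1..N. real (j+0))"
    by (rule prod_dividef)
  also have "\<dots> = (fact (N + M) / fact M) / (fact (N+0) / fact 0)"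
    by (simp only: prod_shift_fact)
  finally have 1: "(\<Prod>j=1..N. 1 + real M / real j) = fact (N + M) / (fact M * fact N)"
    by simp
  have "real ((M+M) choose M) = fact (M + M) / (fact M * fact M)"
    by (subst binomial_fact) auto
  then have "real ((2*M) choose M) = fact (M + M) / (fact M * fact M)"
    unfolding mult_2 .
  also have "M + M = Suc (N + M)" unfolding M_def by simp
  also have "fact (Suc (N+M)) = real (Suc (N + M)) * (fact (N+M) :: real)"
    by (rule fact_Suc)
  also have "(fact M :: real) = real M * fact N" unfolding M_def by simp
  also have "real (Suc (N + M)) = 2 * real M" unfolding M_def by simp
  finally have 2: "real ((2*M) choose M) = 2 * real M * fact (N+M) / (real M * fact N * (real M * fact N))" .
  have fM: "(fact M :: real) = real M * fact N" unfolding M_def by simp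
  have "real M > 0" unfolding M_def by simp
  then show ?thesis unfolding M_def[symmetric] 1 2 fM by (simp add: field_simps)
qed
lemma prod_one: "(\<Prod>j=1..N. 1 + 1 / real j) = real (N+1)"
proof -
  have "(\<Prod>j=1..N. 1 + 1 / real j) = (\<Prod>j=1..N. real (j+1) / real (j + 0))"
    by (intro prod.cong) (auto simp: field_simps)
  also have "\<dots> = (\<Prod>j=1..N. real (j+1)) / (\<Prod>j=1..N. real (j+0))"
    by (rule prod_dividef)
  also have "\<dots> = (fact (N+1) / fact 1) / (fact (N + 0) / fact 0)" by (simp only: prod_shift_fact)
  also have "\<dots> = real (N+1)" by simp
  finally show ?thesis .
qed

lemma E_sum_le: "(\<Sum>k\<le>h. E k N) \<le> real (N+1)"
proof -
  have "(\<Sum>k\<le>h. E k N) \<le> (\<Sum>k\<le>max h N. E k N)"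
    by (intro sum_mono2) (auto simp: E_nonneg)
  also have "\<dots> = (\<Sum>k\<le>max h N. 1^k * E k N)" by simp
  also have "\<dots> = (\<Prod>j=1..N. 1 + 1 / real j)" by (rule E_gen) auto
  also have "\<dots> = real (N+1)" by (rule prod_one)
  finally show ?thesis .
qed

lemma E_le: "E k N \<le> real (N+1)"
proof -
  have "E k N \<le> (\<Sum>k'\<le>k. E k' N)" by (rule member_le_sum) (auto simp: E_nonneg)
  then show ?thesis using E_sum_le[where h=k and N=N] by linarith
qed

definition cc :: "nat \<Rightarrow> nat \<Rightarrow> real" where "cc M N = fact M * fact N / fact (M + N)"

lemma cc_nonneg: "cc M N \<ge> 0" by (simp add: cc_def)
lemma cc_0[simp]: "cc M 0 = 1" by (simp add: cc_def)
lemma cc_sym: "cc M N = cc N M" by (simp add: cc_def add.commute mult.commute)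

lemma cc_Suc: "cc M (Suc R) = cc M R * real (Suc R) / real (M + Suc R)"
proof -
  have "fact (M + Suc R) = real (M + Suc R) * (fact (M + R) :: real)"
    by (simp add: fact_Suc)
  moreover have "fact (Suc R) = real (Suc R) * (fact R :: real)" by simp
  ultimately show ?thesis unfolding cc_def by (simp add: field_simps)
qed

lemma cc_le: "M \<ge> 1 \<Longrightarrow> cc M R \<le> 1 / real (Suc R)"
proof (induction R)
  case (Suc R)
  have "cc M (Suc R) = cc M R * (real (Suc R) / real (M + Suc R))" by (simp add: cc_Suc)
  also have "\<dots> \<le> 1 / real (Suc R) * (real (Suc R) / real (M + Suc R))"
    by (intro mult_right_mono Suc) auto
  also have "\<dots> = 1 / real (M + Suc R)" by simp
  also have "\<dots> \<le> 1 / real (Suc (Suc R))" using Suc.prems by (intro divide_left_mono) auto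
  finally show ?case .
qed simp

lemma cc_lim: "M \<ge> 1 \<Longrightarrow> (\<lambda>R. cc M R) \<longlonglongrightarrow> 0"
proof (rule tendsto_sandwich[of "\<lambda>_. 0" _ _ "\<lambda>R. 1 / real (Suc R)"])
  assume "M \<ge> 1"
  then show "\<forall>\<^sub>F n in sequentially. cc M n \<le> 1 / real (Suc n)"
    by (intro always_eventually allI cc_le)
  show "(\<lambda>R. 1 / real (Suc R)) \<longlonglongrightarrow> 0" by (rule LIMSEQ_inverse_real_of_nat[unfolded inverse_eq_divide])
qed (auto simp: cc_nonneg)

lemma aux2: assumes "(x::real) > 0" "y > 0" shows "c - c*y/(x+y) = x*(c*y/(x+y)/y)"
proof -
  have s: "x + y > 0" "x + y \<noteq> 0" "y \<noteq> 0" using assms by auto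
  have 1: "c - c*y/(x+y) = c*x/(x+y)" using s by (simp add: field_simps)
  have "c*y/(x+y)/y = c/(x+y)" using s by simp
  then have "x*(c*y/(x+y)/y) = c*x/(x+y)" by simp
  with 1 show ?thesis by simp
qed

lemma cc_diff: "M \<ge> 1 \<Longrightarrow> cc M R - cc M (Suc R) = real M * (cc M (Suc R) / real (Suc R))"
proof -
  assume M: "M \<ge> 1"
  then have "real M > 0" "real (Suc R) > 0" by auto
  then have "cc M R - cc M R * real (Suc R) / (real M + real (Suc R)) = real M * (cc M R * real (Suc R) / (real M + real (Suc R)) / real (Suc R))"
    by (rule aux2)
  then show ?thesis by (simp add: cc_Suc add_ac)
qed

lemma tele: assumes "M \<ge> 1"
  shows "(\<lambda>N'. if N < N' then cc M N' / real N' else 0) sums (cc M N / real M)"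
proof -
  have "(\<lambda>i. cc M (N + i) - cc M (Suc (N + i))) sums (cc M (N + 0) - 0)"
    using telescope_sums'[of "\<lambda>i. cc M (N + i)" 0] cc_lim[OF assms] LIMSEQ_ignore_initial_segment[of "\<lambda>R. cc M R" 0 N]
    by (simp add: add.commute)
  then have "(\<lambda>i. (cc M (N + i) - cc M (Suc (N + i))) / real M) sums (cc M N / real M)"
    by (intro sums_divide) simp
  then have "(\<lambda>i. cc M (Suc (N + i)) / real (Suc (N + i))) sums (cc M N / real M)"
    using assms by (simp add: cc_diff)
  then have "(\<lambda>i. (\<lambda>N'. if N < N' then cc M N' / real N' else 0) (i + Suc N)) sums (cc M N / real M)"
    by (simp add: add.commute)
  then show ?thesis by (subst (asm) sums_zero_iff_shift) auto
qed

definition D :: "nat \<Rightarrow> nat \<Rightarrow> real" where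
  "D t N = (if N = 0 then (if t = 0 then 1 else 0) else (if t = 0 then 0 else E (t - 1) (N - 1) / real N))"

lemma D_nonneg: "D t N \<ge> 0" by (simp add: D_def E_nonneg)

lemma D_sum: "(\<Sum>N<N'. D t N) / real N' = D (Suc t) N'"
proof (cases N')
  case (Suc R)
  have "(\<Sum>N<Suc R. D t N) = E t R"
  proof (cases t)
    case 0
    have "(\<Sum>N<Suc R. D t N) = (\<Sum>N<Suc R. if N = 0 then 1 else 0)"
      by (intro sum.cong) (auto simp: D_def 0)
    then show ?thesis by (simp add: 0)
  next
    case (Suc t')
    have "(\<Sum>N<Suc R. D t N) = (\<Sum>N\<in>{1..R}. D t N)"
      by (rule sum.mono_neutral_right) (auto simp: D_def Suc)
    also have "\<dots> = (\<Sum>n=1..R. E t' (n-1) / real n)"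
      by (intro sum.cong) (auto simp: D_def Suc)
    finally show ?thesis by (simp add: Suc E_Suc)
  qed
  then show ?thesis by (simp add: Suc D_def)
qed (simp add: D_def)

lemma ennsuminf_swap: "(\<Sum>i. \<Sum>j. f i j :: ennreal) = (\<Sum>j. \<Sum>i. f i j)"
proof -
  have inc: "incseq (\<lambda>m. \<Sum>j<m. g j :: ennreal)" for g
    by (intro monoI sum_mono2) auto
  have "(\<Sum>i. \<Sum>j. f i j) = (SUP n. \<Sum>i<n. SUP m. \<Sum>j<m. f i j)"
    by (simp add: suminf_eq_SUP)
  also have "\<dots> = (SUP n. SUP m. \<Sum>i<n. \<Sum>j<m. f i j)"
    by (subst ennreal_SUP_sum) (auto intro: inc)
  also have "\<dots> = (SUP m. SUP n. \<Sum>j<m. \<Sum>i<n. f i j)"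
    by (subst SUP_commute) (intro SUP_cong refl sum.swap)
  also have "\<dots> = (SUP m. \<Sum>j<m. SUP n. \<Sum>i<n. f i j)"
    by (subst ennreal_SUP_sum) (auto intro: inc)
  also have "\<dots> = (\<Sum>j. \<Sum>i. f i j)"
    by (simp add: suminf_eq_SUP)
  finally show ?thesis .
qed

definition W :: "nat \<Rightarrow> nat \<Rightarrow> nat \<Rightarrow> real" where
  "W q j M = (if M = 0 then 0 else E q (M - 1) / real M ^ Suc j)"

lemma W_nonneg: "W q j M \<ge> 0" by (simp add: W_def E_nonneg)

definition Z :: "nat \<Rightarrow> nat \<Rightarrow> nat \<Rightarrow> ennreal" where
  "Z q j t = (\<Sum>M. \<Sum>N. ennreal (W q j M * D t N * cc M N))"

lemma inner_step: "(\<Sum>N. ennreal (W q (Suc j) M * D t N * cc M N)) = (\<Sum>N. ennreal (W q j M * D (Suc t) N * cc M N))"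
proof (cases "M = 0")
  case True then show ?thesis by (simp add: W_def)
next
  case False
  then have M1: "M \<ge> 1" by simp
  define w where "w = W q j M"
  have w0: "w \<ge> 0" by (simp add: w_def W_nonneg)
  have WS: "W q (Suc j) M = w / real M" using False by (simp add: w_def W_def field_simps)
  have ts: "(\<Sum>N'. ennreal (if N < N' then cc M N' / real N' else 0)) = ennreal (cc M N / real M)" for N
    by (rule suminf_ennreal_eq[OF _ tele[OF M1]]) (auto simp: cc_nonneg)
  have "(\<Sum>N. ennreal (W q (Suc j) M * D t N * cc M N)) = (\<Sum>N. ennreal (w * D t N) * ennreal (cc M N / real M))"
  proof (intro suminf_cong)
    fix N
    have "W q (Suc j) M * D t N * cc M N = (w * D t N) * (cc M N / real M)"
      unfolding WS by simp
    then show "ennreal (W q (Suc j) M * D t N * cc M N) = ennreal (w * D t N) * ennreal (cc M N / real M)"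
      by (simp only: ennreal_mult[OF mult_nonneg_nonneg[OF w0 D_nonneg] divide_nonneg_nonneg[OF cc_nonneg of_nat_0_le_iff]])
  qed
  also have "\<dots> = (\<Sum>N. \<Sum>N'. ennreal (w * D t N) * ennreal (if N < N' then cc M N' / real N' else 0))"
    by (simp only: ts[symmetric] ennreal_suminf_cmult)
  also have "\<dots> = (\<Sum>N'. \<Sum>N. ennreal (w * D t N) * ennreal (if N < N' then cc M N' / real N' else 0))"
    by (rule ennsuminf_swap)
  also have "\<dots> = (\<Sum>N'. ennreal (W q j M * D (Suc t) N' * cc M N'))"
  proof (intro suminf_cong)
    fix N'
    have "(\<Sum>N. ennreal (w * D t N) * ennreal (if N < N' then cc M N' / real N' else 0))
        = (\<Sum>N<N'. ennreal (w * D t N) * ennreal (if N < N' then cc M N' / real N' else 0))"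
      by (rule suminf_finite) auto
    also have "\<dots> = (\<Sum>N<N'. ennreal (w * D t N * (cc M N' / real N')))"
    proof (intro sum.cong refl)
      fix N assume "N \<in> {..<N'}"
      then have "ennreal (w * D t N) * ennreal (if N < N' then cc M N' / real N' else 0) = ennreal (w * D t N) * ennreal (cc M N' / real N')"
        by simp
      also have "\<dots> = ennreal (w * D t N * (cc M N' / real N'))"
        by (rule ennreal_mult[symmetric]) (auto intro!: mult_nonneg_nonneg w0 D_nonneg divide_nonneg_nonneg cc_nonneg)
      finally show "ennreal (w * D t N) * ennreal (if N < N' then cc M N' / real N' else 0) = ennreal (w * D t N * (cc M N' / real N'))" .
    qed
    also have "\<dots> = ennreal (\<Sum>N<N'. w * D t N * (cc M N' / real N'))"
      by (rule sum_ennreal) (auto intro!: mult_nonneg_nonneg w0 D_nonneg divide_nonneg_nonneg cc_nonneg)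
    also have "(\<Sum>N<N'. w * D t N * (cc M N' / real N')) = (\<Sum>N<N'. D t N) * (w * (cc M N' / real N'))"
      by (subst sum_distrib_right) (rule sum.cong, auto)
    also have "\<dots> = W q j M * ((\<Sum>N<N'. D t N) / real N') * cc M N'"
      by (simp add: w_def)
    also have "\<dots> = W q j M * D (Suc t) N' * cc M N'"
      by (simp only: D_sum)
    finally show "(\<Sum>N. ennreal (w * D t N) * ennreal (if N < N' then cc M N' / real N' else 0)) = ennreal (W q j M * D (Suc t) N' * cc M N')" .
  qed
  finally show ?thesis .
qed

lemma Z_step: "Z q (Suc j) t = Z q j (Suc t)"
  unfolding Z_def by (simp only: inner_step)

lemma Z_iter: "Z q (j + i) t = Z q j (t + i)"
proof (induction i arbitrary: j)
  case (Suc i)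
  have "Z q (j + Suc i) t = Z q (Suc j + i) t" by simp
  also have "\<dots> = Z q (Suc j) (t + i)" by (rule Suc.IH)
  also have "\<dots> = Z q j (t + Suc i)" by (simp add: Z_step)
  finally show ?case .
qed simp

lemma Z_start: "Z q (Suc p) 0 = (\<Sum>n. ennreal (1 / real (Suc n) ^ (p+2) * E q n))"
proof -
  have inner: "(\<Sum>N. ennreal (W q (Suc p) M * D 0 N * cc M N)) = ennreal (W q (Suc p) M)" for M
  proof -
    have "(\<Sum>N. ennreal (W q (Suc p) M * D 0 N * cc M N)) = (\<Sum>N\<in>{0}. ennreal (W q (Suc p) M * D 0 N * cc M N))"
      by (rule suminf_finite) (auto simp: D_def)
    then show ?thesis by (simp add: D_def)
  qed
  have "Z q (Suc p) 0 = (\<Sum>M. ennreal (W q (Suc p) M))"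
    unfolding Z_def inner ..
  also have "\<dots> = (\<Sum>n. ennreal (W q (Suc p) (n + 1))) + (\<Sum>n<1. ennreal (W q (Suc p) n))"
    by (rule suminf_offset) (rule summableI)
  also have "(\<Sum>n<1. ennreal (W q (Suc p) n)) = 0" by (simp add: W_def)
  also have "(\<lambda>n. ennreal (W q (Suc p) (n + 1))) = (\<lambda>n. ennreal (1 / real (Suc n) ^ (p+2) * E q n))"
    by (rule ext) (simp add: W_def)
  finally show ?thesis by simp
qed

lemma W0: "W q 0 M = D (Suc q) M" by (simp add: W_def D_def)

lemma Z_sym: "Z q 0 (Suc p) = Z p 0 (Suc q)"
proof -
  have "Z p 0 (Suc q) = (\<Sum>M. \<Sum>N. ennreal (D (Suc p) M * D (Suc q) N * cc M N))"
    unfolding Z_def W0 ..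
  also have "\<dots> = (\<Sum>N. \<Sum>M. ennreal (D (Suc p) M * D (Suc q) N * cc M N))"
    by (rule ennsuminf_swap)
  also have "\<dots> = (\<Sum>N. \<Sum>M. ennreal (D (Suc q) N * D (Suc p) M * cc N M))"
    by (simp add: cc_sym mult_ac)
  also have "\<dots> = Z q 0 (Suc p)"
    unfolding Z_def W0 ..
  finally show ?thesis ..
qed

lemma dual_enn: "(\<Sum>n. ennreal (1 / real (Suc n) ^ (p+2) * E q n)) = (\<Sum>n. ennreal (1 / real (Suc n) ^ (q+2) * E p n))"
proof -
  have "(\<Sum>n. ennreal (1 / real (Suc n) ^ (p+2) * E q n)) = Z q (0 + Suc p) 0" by (simp add: Z_start)
  also have "\<dots> = Z q 0 (0 + Suc p)" by (rule Z_iter)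
  also have "\<dots> = Z p 0 (Suc q)" by (simp add: Z_sym)
  also have "\<dots> = Z p (0 + Suc q) 0" using Z_iter[of p 0 "Suc q" 0] by simp
  also have "\<dots> = (\<Sum>n. ennreal (1 / real (Suc n) ^ (q+2) * E p n))" by (simp add: Z_start)
  finally show ?thesis .
qed

lemma summable_sq: "summable (\<lambda>n. 1 / real (Suc n) ^ 2)"
proof -
  have "summable (\<lambda>n. inverse (real n ^ 2))" by (rule inverse_power_summable) simp
  then have "summable (\<lambda>n. inverse (real (Suc n) ^ 2))" by (subst summable_Suc_iff)
  then show ?thesis by (simp add: inverse_eq_divide)
qed

lemma mzv_term_le: "s \<ge> 3 \<Longrightarrow> 1 / real (Suc n) ^ s * E q n \<le> 1 / real (Suc n) ^ 2"
proof -
  assume s: "s \<ge> 3"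
  have "1 / real (Suc n) ^ s * E q n \<le> 1 / real (Suc n) ^ s * real (Suc n)"
    using E_le[of q n] by (intro mult_left_mono) auto
  also have "\<dots> = 1 / real (Suc n) ^ (s - 1)"
    using s by (cases s) auto
  also have "\<dots> \<le> 1 / real (Suc n) ^ 2"
    using s by (intro divide_left_mono power_increasing) auto
  finally show ?thesis .
qed

lemma mzv_summable: "s \<ge> 3 \<Longrightarrow> summable (\<lambda>n. 1 / real (Suc n) ^ s * E q n)"
proof (rule summable_comparison_test[OF _ summable_sq])
  assume s: "s \<ge> 3"
  show "\<exists>N. \<forall>n\<ge>N. norm (1 / real (Suc n) ^ s * E q n) \<le> 1 / real (Suc n) ^ 2"
  proof (intro exI[of _ 0] allI impI)
    fix n :: nat
    have "norm (1 / real (Suc n) ^ s * E q n) = 1 / real (Suc n) ^ s * E q n"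
      by (simp add: E_nonneg)
    also have "\<dots> \<le> 1 / real (Suc n) ^ 2" by (rule mzv_term_le[OF s])
    finally show "norm (1 / real (Suc n) ^ s * E q n) \<le> 1 / real (Suc n) ^ 2" .
  qed
qed

lemma mzv_eq: "mzv (s # replicate q 1) = (\<Sum>n. 1 / real (Suc n) ^ s * E q n)"
  by (simp add: E_def)

lemma dual_real: assumes "q \<ge> 1"
  shows "mzv ((p+2) # replicate q 1) = mzv ((q+2) # replicate p 1)"
proof -
  have s2: "summable (\<lambda>n. 1 / real (Suc n) ^ (q+2) * E p n)"
    using assms by (intro mzv_summable) auto
  have nn: "\<And>n. 0 \<le> 1 / real (Suc n) ^ s * E r n" for s r by (simp add: E_nonneg)
  have eq: "(\<Sum>n. ennreal (1 / real (Suc n) ^ (p+2) * E q n)) = ennreal (\<Sum>n. 1 / real (Suc n) ^ (q+2) * E p n)"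
    by (subst dual_enn) (rule suminf_ennreal2[OF nn s2])
  have s1: "summable (\<lambda>n. 1 / real (Suc n) ^ (p+2) * E q n)"
    by (rule summable_suminf_not_top[OF nn]) (simp only: eq ennreal_neq_top not_False_eq_True)
  have "ennreal (\<Sum>n. 1 / real (Suc n) ^ (p+2) * E q n) = ennreal (\<Sum>n. 1 / real (Suc n) ^ (q+2) * E p n)"
    by (rule trans[OF suminf_ennreal2[OF nn s1, symmetric] eq])
  moreover have n1: "0 \<le> (\<Sum>n. 1 / real (Suc n) ^ (p+2) * E q n)" by (rule suminf_nonneg[OF s1 nn])
  moreover have n2: "0 \<le> (\<Sum>n. 1 / real (Suc n) ^ (q+2) * E p n)" by (rule suminf_nonneg[OF s2 nn])
  ultimately show ?thesis unfolding mzv_eq using ennreal_inj[OF n1 n2] by blast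
qed

definition g :: "nat \<Rightarrow> nat \<Rightarrow> nat \<Rightarrow> real" where
  "g m h n = 1 / real (Suc n) ^ m * (\<Sum>k\<le>h. real (Suc n) ^ k * E k n)"

lemma g_nonneg: "g m h n \<ge> 0"
  unfolding g_def by (intro mult_nonneg_nonneg sum_nonneg) (auto simp: E_nonneg)

lemma term_id: assumes "k \<le> m" "(x::real) > 0" shows "1 / x ^ (m - k) * e = 1 / x ^ m * (x ^ k * e)"
proof -
  have "x ^ m = x ^ (m - k) * x ^ k" using assms(1) by (simp add: power_add[symmetric])
  then show ?thesis using assms(2) by (simp add: field_simps)
qed

lemma U_eq: assumes "2*h+2 \<le> m" "m \<ge> 4"
  shows "summable (g m h)" "(\<Sum>k\<le>h. mzv ((m-k) # replicate k 1)) = suminf (g m h)"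
proof -
  have sk: "summable (\<lambda>n. 1 / real (Suc n) ^ (m - k) * E k n)" if "k \<in> {..h}" for k
    using that assms by (intro mzv_summable) auto
  have geq: "g m h = (\<lambda>n. \<Sum>k\<le>h. 1 / real (Suc n) ^ (m - k) * E k n)"
  proof
    fix n
    have "(\<Sum>k\<le>h. 1 / real (Suc n) ^ (m - k) * E k n) = (\<Sum>k\<le>h. 1 / real (Suc n) ^ m * (real (Suc n) ^ k * E k n))"
      using assms by (intro sum.cong refl term_id) auto
    then show "g m h n = (\<Sum>k\<le>h. 1 / real (Suc n) ^ (m - k) * E k n)"
      by (simp add: g_def sum_distrib_left)
  qed
  show "summable (g m h)" unfolding geq by (rule summable_sum[OF sk])
  show "(\<Sum>k\<le>h. mzv ((m-k) # replicate k 1)) = suminf (g m h)"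
    unfolding geq mzv_eq by (rule suminf_sum[OF sk, symmetric])
qed

lemma aux3: "1 / (x::real) * (c / 2) = c / 2 / x" by simp

lemma g_exact: assumes "n \<le> h"
  shows "g m h n = real ((2 * Suc n) choose (Suc n)) / 2 / real (Suc n) ^ m"
proof -
  have "(\<Sum>k\<le>h. real (Suc n) ^ k * E k n) = (\<Prod>j=1..n. 1 + real (Suc n) / real j)"
    by (rule E_gen[OF assms])
  also have "\<dots> = real ((2 * Suc n) choose (Suc n)) / 2" using prod_binom[of n] unfolding Suc_eq_plus1 .
  finally have eq: "(\<Sum>k\<le>h. real (Suc n) ^ k * E k n) = real ((2 * Suc n) choose (Suc n)) / 2" .
  show ?thesis unfolding g_def eq by (rule aux3)
qed

lemma g_bound: "g m h n \<le> real (Suc n) ^ (Suc h) / real (Suc n) ^ m"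
proof -
  have "(\<Sum>k\<le>h. real (Suc n) ^ k * E k n) \<le> (\<Sum>k\<le>h. real (Suc n) ^ h * E k n)"
    by (intro sum_mono mult_right_mono power_increasing) (auto simp: E_nonneg)
  also have "\<dots> = real (Suc n) ^ h * (\<Sum>k\<le>h. E k n)" by (simp add: sum_distrib_left)
  also have "\<dots> \<le> real (Suc n) ^ h * real (Suc n)"
    using E_sum_le[where h=h and N=n] by (intro mult_left_mono) auto
  finally have "(\<Sum>k\<le>h. real (Suc n) ^ k * E k n) \<le> real (Suc n) ^ Suc h" by (simp add: mult.commute)
  then show ?thesis unfolding g_def by (simp add: divide_right_mono)
qed

definition T :: "nat \<Rightarrow> nat \<Rightarrow> real" where
  "T K m = (\<Sum>j = 1..K. real ((2 * j) choose j) / real j ^ m)"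

definition AK :: "nat \<Rightarrow> real" where
  "AK K = 4 ^ ((K+1)^2) * (real ((K+1)^2) + 1)^2 * real (K+1) ^ 4"

definition S2 :: real where "S2 = (\<Sum>n. 1 / real (Suc n) ^ 2)"

lemma case2_ineq:
  fixes x b :: real
  assumes "b \<ge> 1" "x \<ge> b^2" "m \<le> 2*r" "r \<ge> 2"
  shows "b^m * x^2 \<le> b^4 * x^r"
proof -
  have x0: "x \<ge> 0" using assms(1,2) by (smt (verit) one_le_power)
  have "b^m \<le> b^(2*r)" using assms by (intro power_increasing) auto
  also have "\<dots> = b^4 * (b^2)^(r-2)"
  proof -
    have e: "2*r = 4 + 2*(r-2)" using assms(4) by simp
    show ?thesis unfolding e power_add power_mult ..
  qed
  also have "\<dots> \<le> b^4 * x^(r-2)"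
    using assms by (intro mult_left_mono power_mono) auto
  finally have "b^m * x^2 \<le> b^4 * x^(r-2) * x^2" using x0 by (intro mult_right_mono) auto
  also have "\<dots> = b^4 * x^r"
  proof -
    have "r = (r-2) + 2" using assms(4) by simp
    then have "x^r = x^(r-2)*x^2" by (metis power_add)
    then show ?thesis by (simp add: mult.assoc)
  qed
  finally show ?thesis .
qed

lemma inv_le: "(y::real) > 0 \<Longrightarrow> d > 0 \<Longrightarrow> d \<le> c * y \<Longrightarrow> 1 / y \<le> c / d"
  by (simp add: field_simps)

lemma g_pt:
  assumes K: "K \<ge> 1" and h: "2*h+2 \<le> m" "(K+1)^2 \<le> h" and nu: "K \<le> \<nu>"
  shows "g m h \<nu> \<le> AK K / real (K+1) ^ m / real (Suc \<nu>) ^ 2"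
proof -
  define x where "x = real (Suc \<nu>)"
  define b where "b = real (K+1)"
  define N0 where "N0 = (K+1)^2"
  have b1: "b \<ge> 1" and b0: "b > 0" unfolding b_def by auto
  have xb: "x \<ge> b" unfolding x_def b_def using nu by simp
  have x0: "x > 0" unfolding x_def by simp
  have A_ge: "AK K \<ge> 4 ^ N0 * (real N0 + 1)^2 * 1" unfolding AK_def N0_def
    by (intro mult_left_mono) (auto simp: b_def)
  have A_ge2: "AK K \<ge> 1 * 1 * b ^ 4" unfolding AK_def b_def
    by (intro mult_right_mono mult_mono) auto
  show ?thesis
  proof (cases "\<nu> < N0")
    case True
    then have "\<nu> \<le> h" using h unfolding N0_def by simp
    then have "g m h \<nu> = real ((2 * Suc \<nu>) choose (Suc \<nu>)) / 2 / x ^ m"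
      unfolding x_def by (rule g_exact)
    also have "\<dots> \<le> 4 ^ N0 / b ^ m"
    proof -
      have "real ((2 * Suc \<nu>) choose (Suc \<nu>)) \<le> real (2 ^ (2 * Suc \<nu>))"
        using binomial_le_pow2[of "2 * Suc \<nu>" "Suc \<nu>"] by (simp only: of_nat_le_iff)
      also have "real (2 ^ (2 * Suc \<nu>)) = (2::real) ^ (2 * Suc \<nu>)" by simp
      also have "(2::real) ^ (2 * Suc \<nu>) = 4 ^ Suc \<nu>" by (simp add: power_mult)
      also have "(4::real) ^ Suc \<nu> \<le> 4 ^ N0" using True by (intro power_increasing) auto
      finally have c: "real ((2 * Suc \<nu>) choose (Suc \<nu>)) / 2 \<le> 4 ^ N0" by simp
      have "b ^ m \<le> x ^ m" using xb b0 by (intro power_mono) auto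
      then show ?thesis using c b0 x0
        by (intro frac_le) auto
    qed
    also have "\<dots> \<le> AK K / b ^ m / x ^ 2"
    proof -
      have "x \<le> real N0" unfolding x_def using True by simp
      then have "x ^ 2 \<le> (real N0 + 1) ^ 2" using x0 by (intro power_mono) auto
      then have "4 ^ N0 * x^2 \<le> AK K" using A_ge
        by (smt (verit, best) mult_left_mono zero_le_power)
      then have "4 ^ N0 / b ^ m \<le> AK K / x^2 / b^m"
        using x0 b0 by (intro divide_right_mono) (auto simp: field_simps)
      then show ?thesis by (simp add: field_simps)
    qed
    finally show ?thesis unfolding b_def x_def .
  next
    case False
    define r where "r = m - Suc h"
    have mr: "m = Suc h + r" unfolding r_def using h by simp
    have h1: "h \<ge> 1" using h(2) one_le_power[of "K+1" 2] by linarith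
    have r2: "r \<ge> 2" "m \<le> 2 * r" using h h1 unfolding r_def by auto
    have "(K+1)^2 \<le> Suc \<nu>" using False unfolding N0_def by simp
    then have "real ((K+1)^2) \<le> real (Suc \<nu>)" by (simp only: of_nat_le_iff)
    then have xN: "x \<ge> b^2" unfolding x_def b_def by (simp only: of_nat_power)
    have "g m h \<nu> \<le> x ^ Suc h / x ^ m" unfolding x_def by (rule g_bound)
    also have "\<dots> = 1 / x ^ r" unfolding mr using x0 by (simp add: power_add)
    also have "\<dots> \<le> b ^ 4 / (b ^ m * x ^ 2)"
      using case2_ineq[OF b1 xN r2(2) r2(1)] x0 b0 by (intro inv_le) auto
    also have "\<dots> \<le> AK K / (b ^ m * x ^ 2)"
      using A_ge2 x0 b0 by (intro divide_right_mono) auto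
    finally show ?thesis unfolding b_def x_def by (simp add: field_simps)
  qed
qed

lemma aux4: "(a::real) / c / 2 = a / 2 / c" by simp

lemma T_half: assumes "K \<le> h"
  shows "T K m / 2 = (\<Sum>n<K. g m h n)"
proof -
  have "T K m = (\<Sum>n<K. real ((2 * Suc n) choose (Suc n)) / real (Suc n) ^ m)"
    unfolding T_def One_nat_def by (rule sum.atLeast1_atMost_eq)
  then have "T K m / 2 = (\<Sum>n<K. real ((2 * Suc n) choose (Suc n)) / real (Suc n) ^ m / 2)"
    by (simp add: sum_divide_distrib)
  also have "\<dots> = (\<Sum>n<K. g m h n)"
  proof (intro sum.cong refl)
    fix n assume "n \<in> {..<K}"
    then have "n \<le> h" using assms by simp
    then show "real ((2 * Suc n) choose (Suc n)) / real (Suc n) ^ m / 2 = g m h n"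
      by (subst g_exact[OF \<open>n \<le> h\<close>]) (rule aux4)
  qed
  finally show ?thesis .
qed

lemma U_est:
  assumes K: "K \<ge> 1" and h: "2*h+2 \<le> m" "m \<ge> 4" "(K+1)^2 \<le> h"
  shows "\<bar>(\<Sum>k\<le>h. mzv ((m-k) # replicate k 1)) - T K m / 2\<bar> \<le> AK K * S2 / real (K+1) ^ m"
proof -
  have Kh: "K \<le> h"
  proof -
    have "K \<le> (K+1)^2" by (simp add: power2_eq_square)
    then show ?thesis using h(3) by linarith
  qed
  note sg = U_eq(1)[OF h(1,2)] and ueq = U_eq(2)[OF h(1,2)]
  have sgK: "summable (\<lambda>n. g m h (n + K))" using sg by (subst summable_iff_shift)
  have "(\<Sum>k\<le>h. mzv ((m-k) # replicate k 1)) - T K m / 2 = (\<Sum>n. g m h (n + K))"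
    unfolding ueq T_half[OF Kh] using suminf_split_initial_segment[OF sg, of K] by simp
  moreover have "(\<Sum>n. g m h (n + K)) \<ge> 0" by (rule suminf_nonneg[OF sgK g_nonneg])
  moreover have "(\<Sum>n. g m h (n + K)) \<le> AK K * S2 / real (K+1) ^ m"
  proof -
    define c where "c = AK K / real (K+1) ^ m"
    have c0: "c \<ge> 0" unfolding c_def AK_def by simp
    have "(\<Sum>n. g m h (n + K)) \<le> (\<Sum>n. c * (1 / real (Suc n) ^ 2))"
    proof (rule suminf_le[OF _ sgK summable_mult[OF summable_sq]])
      fix n
      have "g m h (n + K) \<le> c / real (Suc (n + K)) ^ 2"
        unfolding c_def by (rule g_pt[OF K h(1,3)]) simp
      also have "\<dots> \<le> c / real (Suc n) ^ 2"
        using c0 by (intro divide_left_mono power_mono mult_pos_pos) auto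
      finally show "g m h (n + K) \<le> c * (1 / real (Suc n) ^ 2)" by simp
    qed
    also have "\<dots> = c * S2" unfolding S2_def by (rule suminf_mult[OF summable_sq])
    finally show ?thesis unfolding c_def by simp
  qed
  ultimately show ?thesis by simp
qed

lemma S_split:
  fixes m :: nat
  defines "f \<equiv> \<lambda>k. mzv ((m-k) # replicate k 1)"
  assumes m: "m \<ge> 4"
  shows "(\<Sum>k=0..m-2. f k) = (\<Sum>k\<le>m div 2 - 1. f k) + (\<Sum>k\<le>m - 2 - m div 2. f k)"
proof -
  define L where "L = m div 2"
  have L: "L \<ge> 2" "2 * L \<le> m" "m \<le> 2 * L + 1" using m unfolding L_def by auto
  have un: "{0..m-2} = {..L-1} \<union> {L..m-2}" using L by auto
  have "(\<Sum>k=0..m-2. f k) = (\<Sum>k\<in>{..L-1} \<union> {L..m-2}. f k)" by (simp only: un)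
  also have "\<dots> = (\<Sum>k\<le>L-1. f k) + (\<Sum>k=L..m-2. f k)"
    by (rule sum.union_disjoint) (use L in auto)
  also have "(\<Sum>k=L..m-2. f k) = (\<Sum>k\<le>m-2-L. f (m-2-k))"
    by (rule sum.reindex_bij_witness[of _ "\<lambda>k. m-2-k" "\<lambda>k. m-2-k"]) (use L in \<open>auto intro!: arg_cong[of _ _ f]\<close>)
  also have "\<dots> = (\<Sum>k\<le>m-2-L. f k)"
  proof (intro sum.cong refl)
    fix k assume "k \<in> {..m-2-L}"
    then have k: "k \<le> m-2-L" by simp
    have e1: "m - (m-2-k) = k + 2" using k L by simp
    have e2: "m - 2 - k + 2 = m - k" using k L by simp
    have "mzv ((k+2) # replicate (m-2-k) 1) = mzv ((m-2-k+2) # replicate k 1)"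
      by (rule dual_real) (use k L in simp)
    then show "f (m-2-k) = f k" unfolding f_def e1 e2 .
  qed
  finally show ?thesis unfolding L_def .
qed

lemma aux5: "S = a + b \<Longrightarrow> \<bar>a - t/2\<bar> \<le> A*B/x \<Longrightarrow> \<bar>b - t/2\<bar> \<le> A*B/x \<Longrightarrow> \<bar>S - t\<bar> \<le> 2*A*B/(x::real)"
  by (simp add: abs_le_iff)

lemma main_bound:
  assumes K: "K \<ge> 1"
  shows "\<forall>\<^sub>F m in at_top. \<bar>(\<Sum>k=0..m-2. mzv ((m-k) # replicate k 1)) - T K m\<bar> \<le> 2 * AK K * S2 / real (K+1) ^ m"
proof -
  define N0 where "N0 = (K+1)^2"
  show ?thesis
  proof (rule eventually_at_top_linorderI[of "2 * N0 + 6"])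
    fix m assume m: "m \<ge> 2 * N0 + 6"
    define L where "L = m div 2"
    have L: "2 * L \<le> m" "m \<le> 2 * L + 1" unfolding L_def by auto
    have m4: "m \<ge> 4" using m by simp
    have h1: "2*(L-1)+2 \<le> m" "N0 \<le> L - 1" using L m by auto
    have h2: "2*(m-2-L)+2 \<le> m" "N0 \<le> m-2-L" using L m by auto
    have e1: "\<bar>(\<Sum>k\<le>L-1. mzv ((m-k) # replicate k 1)) - T K m / 2\<bar> \<le> AK K * S2 / real (K+1) ^ m"
      by (rule U_est[OF K h1(1) m4]) (use h1 in \<open>simp add: N0_def\<close>)
    have e2: "\<bar>(\<Sum>k\<le>m-2-L. mzv ((m-k) # replicate k 1)) - T K m / 2\<bar> \<le> AK K * S2 / real (K+1) ^ m"
      by (rule U_est[OF K h2(1) m4]) (use h2 in \<open>simp add: N0_def\<close>)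
    have "(\<Sum>k=0..m-2. mzv ((m-k) # replicate k 1)) = (\<Sum>k\<le>L-1. mzv ((m-k) # replicate k 1)) + (\<Sum>k\<le>m-2-L. mzv ((m-k) # replicate k 1))"
      unfolding L_def by (rule S_split[OF m4])
    then show "\<bar>(\<Sum>k=0..m-2. mzv ((m-k) # replicate k 1)) - T K m\<bar> \<le> 2 * AK K * S2 / real (K+1) ^ m"
      by (rule aux5[OF _ e1 e2])
  qed
qed

lemma ratio_lim: "(\<lambda>m::nat. real m / (real m - 1)) \<longlonglongrightarrow> 1"
  by real_asymp

theorem corollary4:
  fixes K :: nat
  assumes "K \<ge> 1"
  shows "((\<lambda>m. (\<Sum>k = 0..m - 2. mzv ((m - k) # replicate k 1))
              - (\<Sum>j = 1..K. real ((2 * j) choose j) / real j ^ m))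
           \<in> O[at_top](\<lambda>m. 1 / (real K + 1) ^ m)) \<and>
         ((\<lambda>m. (\<Sum>k = 0..m - 2. mzv ((m - k) # replicate k 1)) / real (m - 1))
           \<sim>[at_top] (\<lambda>m. 2 / real m))"
proof
  define S where "S = (\<lambda>m. (\<Sum>k = 0..m - 2. mzv ((m - k) # replicate k 1)))"
  have Sfold: "(\<Sum>k = 0..m - 2. mzv ((m - k) # replicate k 1)) = S m" for m unfolding S_def ..
  show "(\<lambda>m. (\<Sum>k = 0..m - 2. mzv ((m - k) # replicate k 1))
              - (\<Sum>j = 1..K. real ((2 * j) choose j) / real j ^ m))
           \<in> O[at_top](\<lambda>m. 1 / (real K + 1) ^ m)"
  proof (rule bigoI)
    show "\<forall>\<^sub>F m in at_top. norm ((\<Sum>k = 0..m - 2. mzv ((m - k) # replicate k 1))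
              - (\<Sum>j = 1..K. real ((2 * j) choose j) / real j ^ m)) \<le> (2 * AK K * S2) * norm (1 / (real K + 1) ^ m)"
      using main_bound[OF assms]
    proof (rule eventually_mono)
      fix m
      assume "\<bar>(\<Sum>k=0..m-2. mzv ((m-k) # replicate k 1)) - T K m\<bar> \<le> 2 * AK K * S2 / real (K+1) ^ m"
      then show "norm ((\<Sum>k = 0..m - 2. mzv ((m - k) # replicate k 1))
              - (\<Sum>j = 1..K. real ((2 * j) choose j) / real j ^ m)) \<le> (2 * AK K * S2) * norm (1 / (real K + 1) ^ m)"
        unfolding T_def by (simp add: add.commute)
    qed
  qed
  have T1: "T 1 m = 2" for m unfolding T_def by simp
  have lim0: "(\<lambda>m::nat. 2 * AK 1 * S2 / real (1+1) ^ m) \<longlonglongrightarrow> 0"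
  proof -
    have "(\<lambda>m::nat. 2 * AK 1 * S2 * (1/2) ^ m) \<longlonglongrightarrow> 0"
      by (intro tendsto_mult_right_zero LIMSEQ_power_zero) simp
    then show ?thesis by (simp add: power_divide)
  qed
  have Slim: "S \<longlonglongrightarrow> 2"
  proof (rule LIM_zero_cancel)
    show "(\<lambda>m. S m - 2) \<longlonglongrightarrow> 0"
    proof (rule Lim_null_comparison[OF _ lim0])
      show "\<forall>\<^sub>F m in sequentially. norm (S m - 2) \<le> 2 * AK 1 * S2 / real (1+1) ^ m"
        using main_bound[of 1] unfolding S_def T1 by simp
    qed
  qed
  show "(\<lambda>m. (\<Sum>k = 0..m - 2. mzv ((m - k) # replicate k 1)) / real (m - 1)) \<sim>[at_top] (\<lambda>m. 2 / real m)"
    unfolding Sfold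
  proof (rule asymp_equivI')
    have "(\<lambda>m. S m / 2 * (real m / (real m - 1))) \<longlonglongrightarrow> 2 / 2 * 1"
      by (intro tendsto_mult tendsto_divide Slim ratio_lim tendsto_const) auto
    then have lim: "(\<lambda>m. S m / 2 * (real m / (real m - 1))) \<longlonglongrightarrow> 1" by simp
    have ev: "\<forall>\<^sub>F m in at_top. S m / 2 * (real m / (real m - 1)) = S m / real (m - 1) / (2 / real m)"
    proof (rule eventually_at_top_linorderI[of 2])
      fix m :: nat assume m: "m \<ge> 2"
      then have r: "real (m - 1) = real m - 1" "real m - 1 > 0" "real m > 0" by (auto simp: of_nat_diff)
      show "S m / 2 * (real m / (real m - 1)) = S m / real (m - 1) / (2 / real m)"
        unfolding r(1) using r(2,3) by (simp add: field_simps)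
    qed
    show "((\<lambda>m. S m / real (m - 1) / (2 / real m)) \<longlongrightarrow> 1) at_top"
      using tendsto_cong[OF ev] lim by simp
  qed
qed

end
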